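(* The set of properties consisting of $AL$ (the alternating permutations), $BR$ (the permutations beginning with a rise, i.e. with $\pi(1)<\pi(2)$), $ER$ (the permutations ending with a rise, i.e. with $\pi(n-1)<\pi(n)$ for $\pi\in S_n$), and $\{1\}$ (the set containing only the permutation of length one) is query-complete.
   Context: A permutation $\pi\in S_n$ is alternating if for every $i\in[2,n-1]$, $\pi(i)$ does not lie between $\pi(i-1)$ and $\pi(i+1)$. For $\sigma\in S_m$ and nonempty permutations $\alpha_1,\dots,\alpha_m$, the inflation $\sigma[\alpha_1,\dots,\alpha_m]$ is the permutation obtained by replacing each entry $\sigma(i)$ by an interval (contiguous positions, consecutive values) order-isomorphic to $\alpha_i$. A property is any set of permutations. A set $\mathcal{P}$ of properties is query-complete if for every permutation $\sigma\in S_m$ and every $P\in\mathcal{P}$, whether $\sigma[\alpha_1,\dots,\alpha_m]\in P$ is determined by $\sigma$ together with the knowledge, for each $i\in[m]$ and each $Q\in\mathcal{P}$, of whether $\alpha_i\in Q$. *)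

theory Defs
  imports Main
begin

text \<open>A permutation of length n is a list that is a rearrangement of [0..<n]
  (0-based values; the list at position i is pi(i+1)-1).\<close>
definition is_perm :: "nat list \<Rightarrow> bool" where
  "is_perm xs \<longleftrightarrow> distinct xs \<and> set xs = {0..<length xs}"

definition alternating :: "nat list \<Rightarrow> bool" where
  "alternating p \<longleftrightarrow> (\<forall>i. 0 < i \<and> i + 1 < length p \<longrightarrow>
      \<not> ((p!(i-1) < p!i \<and> p!i < p!(i+1)) \<or> (p!(i-1) > p!i \<and> p!i > p!(i+1))))"

definition AL :: "nat list set" where
  "AL = {p. is_perm p \<and> alternating p}"

definition BR :: "nat list set" where
  "BR = {p. is_perm p \<and> 2 \<le> length p \<and> p!0 < p!1}"

definition ER :: "nat list set" where
  "ER = {p. is_perm p \<and> 2 \<le> length p \<and> p!(length p - 2) < p!(length p - 1)}"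

definition ONE :: "nat list set" where
  "ONE = {[0]}"

definition infl_offset :: "nat list \<Rightarrow> nat list list \<Rightarrow> nat \<Rightarrow> nat" where
  "infl_offset \<sigma> as i = sum_list [length (as!j). j \<leftarrow> [0..<length \<sigma>], \<sigma>!j < \<sigma>!i]"

definition inflation :: "nat list \<Rightarrow> nat list list \<Rightarrow> nat list" where
  "inflation \<sigma> as = concat (map (\<lambda>i. map (\<lambda>x. x + infl_offset \<sigma> as i) (as!i)) [0..<length \<sigma>])"

definition query_complete :: "nat list set set \<Rightarrow> bool" where
  "query_complete \<P> \<longleftrightarrow>
     (\<forall>\<sigma> as bs. is_perm \<sigma> \<and> length as = length \<sigma> \<and> length bs = length \<sigma> \<and>
        (\<forall>i<length \<sigma>. is_perm (as!i) \<and> as!i \<noteq> [] \<and> is_perm (bs!i) \<and> bs!i \<noteq> [] \<and>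
            (\<forall>Q\<in>\<P>. as!i \<in> Q \<longleftrightarrow> bs!i \<in> Q))
      \<longrightarrow> (\<forall>P\<in>\<P>. inflation \<sigma> as \<in> P \<longleftrightarrow> inflation \<sigma> bs \<in> P))"

end

theory Submission
  imports Defs
begin

fun ups :: "nat list \<Rightarrow> bool list" where
  "ups (a # b # r) = (a < b) # ups (b # r)"
| "ups _ = []"

fun noadj :: "bool list \<Rightarrow> bool" where
  "noadj (a # b # r) = (a \<noteq> b \<and> noadj (b # r))"
| "noadj _ = True"

lemma length_ups: "length (ups p) = length p - 1"
  by (induction p rule: ups.induct) auto

lemma nth_ups: "k < length p - 1 \<Longrightarrow> ups p ! k = (p ! k < p ! Suc k)"
proof (induction p arbitrary: k rule: ups.induct)
  case (1 a b r)
  then show ?case by (cases k) auto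
qed auto

lemma noadj_nth: "noadj u = (\<forall>k. Suc k < length u \<longrightarrow> u ! k \<noteq> u ! Suc k)"
proof (induction u rule: noadj.induct)
  case (1 a b r)
  show ?case
  proof
    assume "noadj (a # b # r)"
    then show "\<forall>k. Suc k < length (a # b # r) \<longrightarrow> (a # b # r) ! k \<noteq> (a # b # r) ! Suc k"
      using 1 by (auto simp: less_Suc_eq_0_disj)
  next
    assume H: "\<forall>k. Suc k < length (a # b # r) \<longrightarrow> (a # b # r) ! k \<noteq> (a # b # r) ! Suc k"
    have "a \<noteq> b" using H[rule_format, of 0] by simp
    moreover have "noadj (b # r)" unfolding 1
    proof (intro allI impI)
      fix k assume "Suc k < length (b # r)"
      then show "(b # r) ! k \<noteq> (b # r) ! Suc k" using H[rule_format, of "Suc k"] by simp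
    qed
    ultimately show "noadj (a # b # r)" by simp
  qed
qed auto

lemma ups_append: "xs \<noteq> [] \<Longrightarrow> ys \<noteq> [] \<Longrightarrow> ups (xs @ ys) = ups xs @ (last xs < hd ys) # ups ys"
  by (induction xs rule: ups.induct) (auto simp: neq_Nil_conv)

lemma ups_shift: "ups (map (\<lambda>x. x + c) p) = ups p"
  by (induction p rule: ups.induct) auto

lemma noadj_append: "noadj (u @ z # v) = (noadj u \<and> noadj (z # v) \<and> (u \<noteq> [] \<longrightarrow> last u \<noteq> z))"
  by (induction u rule: noadj.induct) auto

lemma noadj_Cons: "noadj (z # v) = (noadj v \<and> (v \<noteq> [] \<longrightarrow> hd v \<noteq> z))"
  by (cases v) auto

definition S :: "nat list \<Rightarrow> bool \<times> bool \<times> bool \<times> bool" where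
  "S p = (noadj (ups p), ups p = [], hd (ups p), last (ups p))"

definition F :: "bool \<times> bool \<times> bool \<times> bool \<Rightarrow> bool \<times> bool \<times> bool \<times> bool \<Rightarrow> bool \<Rightarrow> bool \<times> bool \<times> bool \<times> bool" where
  "F s t z = (case s of (n1, e1, h1, l1) \<Rightarrow> case t of (n2, e2, h2, l2) \<Rightarrow>
     (n1 \<and> n2 \<and> (\<not> e1 \<longrightarrow> l1 \<noteq> z) \<and> (\<not> e2 \<longrightarrow> h2 \<noteq> z), False,
      if e1 then z else h1, if e2 then z else l2))"

lemma S_append: "xs \<noteq> [] \<Longrightarrow> ys \<noteq> [] \<Longrightarrow> S (xs @ ys) = F (S xs) (S ys) (last xs < hd ys)"
  unfolding S_def F_def using ups_append[of xs ys]
  by (simp add: noadj_append noadj_Cons hd_append last_append) blast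

lemma concat_S:
  "length Bs = length Cs \<Longrightarrow> Bs \<noteq> [] \<Longrightarrow>
   \<forall>i<length Bs. Bs!i \<noteq> [] \<and> Cs!i \<noteq> [] \<and> S (Bs!i) = S (Cs!i) \<Longrightarrow>
   \<forall>i. Suc i < length Bs \<longrightarrow> (last (Bs!i) < hd (Bs!Suc i)) = (last (Cs!i) < hd (Cs!Suc i)) \<Longrightarrow>
   S (concat Bs) = S (concat Cs)"
proof (induction Bs arbitrary: Cs)
  case Nil
  then show ?case by simp
next
  case (Cons B Bs)
  obtain C Cs' where Cs: "Cs = C # Cs'" using Cons.prems(1) by (cases Cs) auto
  show ?case
  proof (cases "Bs = []")
    case True
    then show ?thesis using Cons.prems Cs by auto
  next
    case False
    have lenB: "length Bs = length Cs'" using Cons.prems(1) Cs by simp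
    have Cs'ne: "Cs' \<noteq> []" using False lenB by auto
    have IH: "S (concat Bs) = S (concat Cs')"
      apply (rule Cons.IH[OF lenB False])
      using Cons.prems(3,4) Cs by auto
    have b0: "Bs ! 0 \<noteq> []" "Cs' ! 0 \<noteq> []" using Cons.prems(3) Cs False Cs'ne
      by (auto dest: spec[of _ 1])
    have hB: "hd (concat Bs) = hd (Bs!0)" using b0 False by (cases Bs) auto
    have hC: "hd (concat Cs') = hd (Cs'!0)" using b0 Cs'ne by (cases Cs') auto
    have neB: "concat Bs \<noteq> []" using b0 False by (cases Bs) auto
    have neC: "concat Cs' \<noteq> []" using b0 Cs'ne by (cases Cs') auto
    have z: "(last B < hd (Bs!0)) = (last C < hd (Cs'!0))"
      using Cons.prems(4) Cs False by (auto dest: spec[of _ 0])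
    have BC: "B \<noteq> []" "C \<noteq> []" "S B = S C" using Cons.prems(3) Cs by (auto dest: spec[of _ 0])
    show ?thesis using S_append[of B "concat Bs"] S_append[of C "concat Cs'"] BC neB neC hB hC z IH Cs
      by simp
  qed
qed


lemma concat_filter: "concat (map (\<lambda>j. if P j then [f j] else []) xs) = map f (filter P xs)"
  by (induction xs) auto

lemma off_eq: "infl_offset \<sigma> as i = sum (\<lambda>k. length (as!k)) {k. k < length \<sigma> \<and> \<sigma>!k < \<sigma>!i}"
proof -
  have "infl_offset \<sigma> as i = sum_list (map (\<lambda>k. length (as!k)) (filter (\<lambda>k. \<sigma>!k < \<sigma>!i) [0..<length \<sigma>]))"
    unfolding infl_offset_def concat_filter by simp
  also have "\<dots> = sum (\<lambda>k. length (as!k)) (set (filter (\<lambda>k. \<sigma>!k < \<sigma>!i) [0..<length \<sigma>]))"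
    by (rule sum_list_distinct_conv_sum_set) simp
  also have "set (filter (\<lambda>k. \<sigma>!k < \<sigma>!i) [0..<length \<sigma>]) = {k. k < length \<sigma> \<and> \<sigma>!k < \<sigma>!i}"
    by auto
  finally show ?thesis .
qed

lemma off_sep:
  assumes "i < length \<sigma>" "j < length \<sigma>" "\<sigma>!i < \<sigma>!j"
  shows "infl_offset \<sigma> as i + length (as!i) \<le> infl_offset \<sigma> as j"
proof -
  let ?L = "\<lambda>k. length (as!k)"
  let ?A = "{k. k < length \<sigma> \<and> \<sigma>!k < \<sigma>!i}"
  let ?B = "{k. k < length \<sigma> \<and> \<sigma>!k < \<sigma>!j}"
  have fin: "finite ?A" "finite ?B" by auto
  have "i \<notin> ?A" by simp
  then have "sum ?L (insert i ?A) = ?L i + sum ?L ?A" using fin by simp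
  moreover have "insert i ?A \<subseteq> ?B" using assms by auto
  moreover have "sum ?L (insert i ?A) \<le> sum ?L ?B"
    by (rule sum_mono2[OF fin(2)]) (use assms in auto)
  ultimately have "?L i + sum ?L ?A \<le> sum ?L ?B" by simp
  then show ?thesis unfolding off_eq by simp
qed

lemma off_bound:
  assumes "i < length \<sigma>"
  shows "infl_offset \<sigma> as i + length (as!i) \<le> sum (\<lambda>k. length (as!k)) {0..<length \<sigma>}"
proof -
  let ?L = "\<lambda>k. length (as!k)"
  let ?A = "{k. k < length \<sigma> \<and> \<sigma>!k < \<sigma>!i}"
  have fin: "finite ?A" by auto
  have "i \<notin> ?A" by simp
  then have "sum ?L (insert i ?A) = ?L i + sum ?L ?A" using fin by simp
  moreover have "insert i ?A \<subseteq> {0..<length \<sigma>}" using assms by auto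
  moreover have "sum ?L (insert i ?A) \<le> sum ?L {0..<length \<sigma>}"
    by (rule sum_mono2) (use assms in auto)
  ultimately have "?L i + sum ?L ?A \<le> sum ?L {0..<length \<sigma>}" by simp
  then show ?thesis unfolding off_eq by simp
qed

definition blk :: "nat list \<Rightarrow> nat list list \<Rightarrow> nat \<Rightarrow> nat list" where
  "blk \<sigma> as i = map (\<lambda>x. x + infl_offset \<sigma> as i) (as!i)"

lemma infl_blk: "inflation \<sigma> as = concat (map (blk \<sigma> as) [0..<length \<sigma>])"
  unfolding inflation_def blk_def by simp

lemma length_infl: "length (inflation \<sigma> as) = sum (\<lambda>k. length (as!k)) {0..<length \<sigma>}"
  unfolding inflation_def by (simp add: length_concat o_def interv_sum_list_conv_sum_set_nat)

lemma set_blk: "is_perm (as!i) \<Longrightarrow> x \<in> set (blk \<sigma> as i) \<Longrightarrow>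
   infl_offset \<sigma> as i \<le> x \<and> x < infl_offset \<sigma> as i + length (as!i)"
  unfolding blk_def is_perm_def by auto

lemma distinct_concat_upt:
  "(\<forall>i<n. distinct (f i)) \<Longrightarrow> (\<forall>i<n. \<forall>j<n. i \<noteq> j \<longrightarrow> set (f i) \<inter> set (f j) = {}) \<Longrightarrow>
   distinct (concat (map f [0..<n]))"
proof (induction n)
  case 0
  then show ?case by simp
next
  case (Suc n)
  have "distinct (concat (map f [0..<n]))" using Suc by auto
  moreover have "set (concat (map f [0..<n])) \<inter> set (f n) = {}"
  proof -
    { fix x i assume "i < n" "x \<in> set (f i)" "x \<in> set (f n)"
      then have False using Suc.prems(2)[rule_format, of i n] by auto }
    then show ?thesis by auto
  qed
  ultimately show ?case using Suc.prems(1) by simp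
qed

lemma blk_disj:
  assumes "is_perm \<sigma>" "\<forall>i<length \<sigma>. is_perm (as!i)" "i < length \<sigma>" "j < length \<sigma>" "i \<noteq> j"
  shows "set (blk \<sigma> as i) \<inter> set (blk \<sigma> as j) = {}"
proof -
  have "\<sigma>!i \<noteq> \<sigma>!j" using assms by (simp add: is_perm_def nth_eq_iff_index_eq)
  then consider "\<sigma>!i < \<sigma>!j" | "\<sigma>!j < \<sigma>!i" by linarith
  then show ?thesis
  proof cases
    case 1
    then show ?thesis using off_sep[OF assms(3,4) 1, of as] set_blk[of as i _ \<sigma>] set_blk[of as j _ \<sigma>] assms
      by fastforce
  next
    case 2
    then show ?thesis using off_sep[OF assms(4,3) 2, of as] set_blk[of as i _ \<sigma>] set_blk[of as j _ \<sigma>] assms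
      by fastforce
  qed
qed

lemma infl_perm:
  assumes "is_perm \<sigma>" "\<forall>i<length \<sigma>. is_perm (as!i)"
  shows "is_perm (inflation \<sigma> as)"
proof -
  let ?p = "inflation \<sigma> as"
  have d: "distinct ?p" unfolding infl_blk
    apply (rule distinct_concat_upt)
    using assms blk_disj[OF assms] by (auto simp: blk_def is_perm_def distinct_map inj_on_def)
  have sub: "set ?p \<subseteq> {0..<length ?p}"
  proof
    fix x assume "x \<in> set ?p"
    then obtain i where i: "i < length \<sigma>" "x \<in> set (blk \<sigma> as i)" unfolding infl_blk by auto
    then have "x < infl_offset \<sigma> as i + length (as!i)" using set_blk assms by blast
    also have "\<dots> \<le> length ?p" using off_bound[OF i(1)] length_infl by metis
    finally show "x \<in> {0..<length ?p}" by simp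
  qed
  have "set ?p = {0..<length ?p}"
    by (rule card_subset_eq[OF _ sub]) (simp_all add: distinct_card[OF d])
  then show ?thesis using d unfolding is_perm_def by simp
qed

lemma adj_cmp:
  assumes "is_perm \<sigma>" "\<forall>i<length \<sigma>. is_perm (as!i) \<and> as!i \<noteq> []" "Suc i < length \<sigma>"
  shows "(last (blk \<sigma> as i) < hd (blk \<sigma> as (Suc i))) = (\<sigma>!i < \<sigma>!Suc i)"
proof -
  have ne: "blk \<sigma> as i \<noteq> []" "blk \<sigma> as (Suc i) \<noteq> []" using assms by (auto simp: blk_def)
  have l: "last (blk \<sigma> as i) \<in> set (blk \<sigma> as i)" using ne by simp
  have h: "hd (blk \<sigma> as (Suc i)) \<in> set (blk \<sigma> as (Suc i))" using ne by simp
  have pi: "is_perm (as!i)" "is_perm (as!Suc i)" using assms by auto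
  have "\<sigma>!i \<noteq> \<sigma>!Suc i" using assms by (simp add: is_perm_def nth_eq_iff_index_eq)
  then consider "\<sigma>!i < \<sigma>!Suc i" | "\<sigma>!Suc i < \<sigma>!i" by linarith
  then show ?thesis
  proof cases
    case 1
    then show ?thesis using off_sep[of i \<sigma> "Suc i" as] assms set_blk[OF pi(1) l] set_blk[OF pi(2) h]
      by auto
  next
    case 2
    then show ?thesis using off_sep[of "Suc i" \<sigma> i as] assms set_blk[OF pi(1) l] set_blk[OF pi(2) h]
      by auto
  qed
qed

lemma S_blk: "S (blk \<sigma> as i) = S (as!i)"
  unfolding S_def blk_def ups_shift ..

lemma alt_noadj:
  assumes "distinct p"
  shows "alternating p = noadj (ups p)"
proof -
  have nq: "p!k \<noteq> p!Suc k" if "Suc k < length p" for k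
    using assms that by (simp add: nth_eq_iff_index_eq)
  have "noadj (ups p) = (\<forall>k. Suc k < length p - 1 \<longrightarrow> (p!k < p!Suc k) \<noteq> (p!Suc k < p!Suc (Suc k)))"
    unfolding noadj_nth length_ups by (auto simp: nth_ups)
  also have "\<dots> = alternating p"
    unfolding alternating_def
  proof (intro iffI allI impI)
    fix i assume H: "\<forall>k. Suc k < length p - 1 \<longrightarrow> (p!k < p!Suc k) \<noteq> (p!Suc k < p!Suc (Suc k))"
      and i: "0 < i \<and> i + 1 < length p"
    then obtain k where k: "i = Suc k" by (cases i) auto
    have kk: "Suc k < length p - 1" using i k by simp
    show "\<not> ((p!(i-1) < p!i \<and> p!i < p!(i+1)) \<or> (p!(i-1) > p!i \<and> p!i > p!(i+1)))"
      using H[rule_format, OF kk] i k nq[of k] nq[of "Suc k"] by auto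
  next
    fix k assume H: "\<forall>i. 0 < i \<and> i + 1 < length p \<longrightarrow>
      \<not> ((p!(i-1) < p!i \<and> p!i < p!(i+1)) \<or> (p!(i-1) > p!i \<and> p!i > p!(i+1)))"
      and k: "Suc k < length p - 1"
    have k2: "0 < Suc k \<and> Suc k + 1 < length p" using k by simp
    have n1: "p!k \<noteq> p!Suc k" "p!Suc k \<noteq> p!Suc (Suc k)" using nq k by auto
    show "(p!k < p!Suc k) \<noteq> (p!Suc k < p!Suc (Suc k))"
      using H[rule_format, OF k2] n1 by auto
  qed
  finally show ?thesis ..
qed

lemma perm_one: "is_perm p \<Longrightarrow> (p = [0]) = (length p = 1)"
  unfolding is_perm_def by (auto simp: length_Suc_conv)

lemma mem_char:
  assumes "is_perm p" "p \<noteq> []"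
  shows "(p \<in> AL) = noadj (ups p)" "(p \<in> ONE) = (ups p = [])"
    "(p \<in> BR) = (ups p \<noteq> [] \<and> hd (ups p))" "(p \<in> ER) = (ups p \<noteq> [] \<and> last (ups p))"
proof -
  have d: "distinct p" using assms is_perm_def by blast
  show "(p \<in> AL) = noadj (ups p)" unfolding AL_def using assms alt_noadj[OF d] by simp
  have e0: "(ups p = []) = (length (ups p) = 0)" by simp
  have e: "(ups p = []) = (length p = 1)" using assms length_ups[of p] e0
    by (cases p) auto
  show "(p \<in> ONE) = (ups p = [])" unfolding ONE_def using e perm_one[OF assms(1)] by simp
  have e2: "(ups p \<noteq> []) = (2 \<le> length p)" using length_ups[of p] e0 by auto
  have h: "hd (ups p) = (p!0 < p!1)" if "2 \<le> length p"
    using that nth_ups[of 0 p] length_ups[of p] by (subst hd_conv_nth) auto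
  have l: "last (ups p) = (p!(length p - 2) < p!(length p - 1))" if "2 \<le> length p"
  proof -
    have "ups p \<noteq> []" using e2 that by simp
    then have "last (ups p) = ups p ! (length p - 2)" using length_ups[of p] by (simp add: last_conv_nth numeral_2_eq_2)
    also have "\<dots> = (p!(length p - 2) < p!Suc (length p - 2))" using that by (simp add: nth_ups)
    also have "Suc (length p - 2) = length p - 1" using that by simp
    finally show ?thesis .
  qed
  show "(p \<in> BR) = (ups p \<noteq> [] \<and> hd (ups p))" unfolding BR_def using assms e2 h by auto
  show "(p \<in> ER) = (ups p \<noteq> [] \<and> last (ups p))" unfolding ER_def using assms e2 l by auto
qed

lemma S_eq:
  assumes "is_perm p" "p \<noteq> []" "is_perm q" "q \<noteq> []"
    "\<forall>Q\<in>{AL, BR, ER, ONE}. p \<in> Q \<longleftrightarrow> q \<in> Q"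
  shows "S p = S q"
proof -
  have a: "noadj (ups p) = noadj (ups q)" using assms mem_char by auto
  have b: "(ups p = []) = (ups q = [])" using assms mem_char(2)[of p] mem_char(2)[of q] by auto
  have c: "hd (ups p) = hd (ups q)" using assms b mem_char(3)[of p] mem_char(3)[of q]
    by (cases "ups p = []") auto
  have d: "last (ups p) = last (ups q)" using assms b mem_char(4)[of p] mem_char(4)[of q]
    by (cases "ups p = []") auto
  show ?thesis unfolding S_def using a b c d by simp
qed

theorem lemma4p2:
  shows "query_complete {AL, BR, ER, ONE}"
  unfolding query_complete_def
proof (intro allI impI ballI)
  fix \<sigma> as bs P
  assume H: "is_perm \<sigma> \<and> length as = length \<sigma> \<and> length bs = length \<sigma> \<and>
        (\<forall>i<length \<sigma>. is_perm (as!i) \<and> as!i \<noteq> [] \<and> is_perm (bs!i) \<and> bs!i \<noteq> [] \<and>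
            (\<forall>Q\<in>{AL, BR, ER, ONE}. as!i \<in> Q \<longleftrightarrow> bs!i \<in> Q))"
    and P: "P \<in> {AL, BR, ER, ONE}"
  let ?m = "length \<sigma>"
  show "inflation \<sigma> as \<in> P \<longleftrightarrow> inflation \<sigma> bs \<in> P"
  proof (cases "?m = 0")
    case True
    then show ?thesis unfolding inflation_def by simp
  next
    case False
    have pa: "\<forall>i<?m. is_perm (as!i) \<and> as!i \<noteq> []" and pb: "\<forall>i<?m. is_perm (bs!i) \<and> bs!i \<noteq> []"
      using H by auto
    have S: "S (inflation \<sigma> as) = S (inflation \<sigma> bs)"
      unfolding infl_blk
    proof (rule concat_S)
      show "length (map (blk \<sigma> as) [0..<?m]) = length (map (blk \<sigma> bs) [0..<?m])" by simp
      show "map (blk \<sigma> as) [0..<?m] \<noteq> []" using False by simp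
      show "\<forall>i<length (map (blk \<sigma> as) [0..<?m]). map (blk \<sigma> as) [0..<?m] ! i \<noteq> [] \<and>
          map (blk \<sigma> bs) [0..<?m] ! i \<noteq> [] \<and> S (map (blk \<sigma> as) [0..<?m] ! i) = S (map (blk \<sigma> bs) [0..<?m] ! i)"
        using H S_eq by (auto simp: blk_def S_blk[unfolded blk_def])
      show "\<forall>i. Suc i < length (map (blk \<sigma> as) [0..<?m]) \<longrightarrow>
        (last (map (blk \<sigma> as) [0..<?m] ! i) < hd (map (blk \<sigma> as) [0..<?m] ! Suc i)) =
        (last (map (blk \<sigma> bs) [0..<?m] ! i) < hd (map (blk \<sigma> bs) [0..<?m] ! Suc i))"
        using adj_cmp[of \<sigma> as] adj_cmp[of \<sigma> bs] H pa pb by simp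
    qed
    have perms: "is_perm (inflation \<sigma> as)" "is_perm (inflation \<sigma> bs)"
      using infl_perm H pa pb by auto
    have ne: "inflation \<sigma> as \<noteq> []" "inflation \<sigma> bs \<noteq> []"
      using False pa pb unfolding infl_blk blk_def
      by (auto simp: concat_eq_Nil_conv)
    have S': "noadj (ups (inflation \<sigma> as)) = noadj (ups (inflation \<sigma> bs))"
      "(ups (inflation \<sigma> as) = []) = (ups (inflation \<sigma> bs) = [])"
      "hd (ups (inflation \<sigma> as)) = hd (ups (inflation \<sigma> bs))"
      "last (ups (inflation \<sigma> as)) = last (ups (inflation \<sigma> bs))"
      using S unfolding S_def by simp_all
    show ?thesis using P mem_char[OF perms(1) ne(1)] mem_char[OF perms(2) ne(2)] S' by auto
  qed
qed

end
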